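(* Fix $a\in\mathbb{C}\setminus\{0\}$ and let $U\subset\mathbb{C}\setminus\{0\}$ be a domain on which $1-ax\neq 0$ (and on which the functions below are nowhere vanishing). Define \[ f_1(x)=\frac{ax}{1-ax},\qquad f_2(x)=\frac{1}{1-ax},\qquad x\in U. \] Then $\mathcal{A}[f_1]=f_2$ and $\mathcal{A}[f_2]=f_1$ on $U$, and $f_1\not\equiv f_2$; that is, $(f_1,f_2)$ is a nondegenerate period-$2$ orbit of $\mathcal{A}$.
   Context: For a complex-differentiable, nowhere-vanishing function $f$ on a domain $U\subset\mathbb{C}\setminus\{0\}$, the dual logarithmic derivative operator is $\mathcal{A}[f](x)=\dfrac{\mathrm{d}\ln f(x)}{\mathrm{d}\ln x}=\dfrac{x f'(x)}{f(x)}$ (for any fixed analytic branches of the logarithms). A pair $(f_1,f_2)$ of holomorphic nowhere-vanishing functions on $U$ is a period-$2$ orbit of $\mathcal{A}$ if $\mathcal{A}[f_1]=f_2$ and $\mathcal{A}[f_2]=f_1$; it is nondegenerate if $f_1\not\equiv f_2$. *)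

theory Defs
  imports "HOL-Complex_Analysis.Complex_Analysis"
begin

definition dual_log_deriv :: "(complex \<Rightarrow> complex) \<Rightarrow> complex \<Rightarrow> complex" where
  "dual_log_deriv f x = x * deriv f x / f x"

definition is_domain :: "complex set \<Rightarrow> bool" where
  "is_domain U \<longleftrightarrow> open U \<and> connected U \<and> U \<noteq> {}"

definition nondeg_period2_orbit ::
  "complex set \<Rightarrow> (complex \<Rightarrow> complex) \<Rightarrow> (complex \<Rightarrow> complex) \<Rightarrow> bool" where
  "nondeg_period2_orbit U f1 f2 \<longleftrightarrow>
     f1 holomorphic_on U \<and> f2 holomorphic_on U \<and>
     (\<forall>x\<in>U. f1 x \<noteq> 0 \<and> f2 x \<noteq> 0) \<and>
     (\<forall>x\<in>U. dual_log_deriv f1 x = f2 x) \<and>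
     (\<forall>x\<in>U. dual_log_deriv f2 x = f1 x) \<and>
     (\<exists>x\<in>U. f1 x \<noteq> f2 x)"

end

theory Submission
  imports Defs
begin

lemma d1: assumes "1 - a * x \<noteq> (0::complex)"
  shows "((\<lambda>x. a * x / (1 - a * x)) has_field_derivative a / (1 - a*x)^2) (at x)"
proof -
  have "((\<lambda>x. a * x / (1 - a * x)) has_field_derivative
     ((a * (1 - a*x) - a*x * (- a)) / ((1 - a*x) * (1 - a*x)))) (at x)"
    by (rule derivative_eq_intros refl | use assms in simp)+
  moreover have "(a * (1 - a*x) - a*x * (- a)) / ((1 - a*x) * (1 - a*x)) = a / (1 - a*x)^2"
    by (simp add: power2_eq_square algebra_simps)
  ultimately show ?thesis by simp
qed

lemma d2: assumes "1 - a * x \<noteq> (0::complex)"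
  shows "((\<lambda>x. 1 / (1 - a * x)) has_field_derivative a / (1 - a*x)^2) (at x)"
proof -
  have "((\<lambda>x. 1 / (1 - a * x)) has_field_derivative
     ((0 * (1 - a*x) - 1 * (- a)) / ((1 - a*x) * (1 - a*x)))) (at x)"
    by (rule derivative_eq_intros refl | use assms in simp)+
  moreover have "(0 * (1 - a*x) - 1 * (- a)) / ((1 - a*x) * (1 - a*x)) = a / (1 - a*x)^2"
    by (simp add: power2_eq_square algebra_simps)
  ultimately show ?thesis by (simp add: power2_eq_square)
qed

theorem proposition3p1:
  fixes a :: complex and U :: "complex set"
  assumes "a \<noteq> 0"
    and "is_domain U" and "0 \<notin> U"
    and "\<forall>x\<in>U. 1 - a * x \<noteq> 0"
    and "\<forall>x\<in>U. a * x / (1 - a * x) \<noteq> 0 \<and> 1 / (1 - a * x) \<noteq> 0"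
  shows "(\<forall>x\<in>U. dual_log_deriv (\<lambda>x. a * x / (1 - a * x)) x = 1 / (1 - a * x))
       \<and> (\<forall>x\<in>U. dual_log_deriv (\<lambda>x. 1 / (1 - a * x)) x = a * x / (1 - a * x))
       \<and> (\<exists>x\<in>U. a * x / (1 - a * x) \<noteq> 1 / (1 - a * x))
       \<and> nondeg_period2_orbit U (\<lambda>x. a * x / (1 - a * x)) (\<lambda>x. 1 / (1 - a * x))"
proof -
  have A: "\<forall>x\<in>U. dual_log_deriv (\<lambda>x. a * x / (1 - a * x)) x = 1 / (1 - a * x)"
  proof
    fix x assume x: "x \<in> U"
    then have n: "1 - a*x \<noteq> 0" and x0: "x \<noteq> 0" using assms by auto
    show "dual_log_deriv (\<lambda>x. a * x / (1 - a * x)) x = 1 / (1 - a * x)"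
      unfolding dual_log_deriv_def DERIV_imp_deriv[OF d1[OF n]]
    proof -
      have g: "\<And>d::complex. d \<noteq> 0 \<Longrightarrow> a*x \<noteq> 0 \<Longrightarrow> x * (a / d\<^sup>2) / (a * x / d) = 1 / d"
        by (simp add: field_simps power2_eq_square)
      show "x * (a / (1 - a * x)\<^sup>2) / (a * x / (1 - a * x)) = 1 / (1 - a * x)"
        using g[OF n] x0 assms(1) by simp
    qed
  qed
  have B: "\<forall>x\<in>U. dual_log_deriv (\<lambda>x. 1 / (1 - a * x)) x = a * x / (1 - a * x)"
  proof
    fix x assume x: "x \<in> U"
    then have n: "1 - a*x \<noteq> 0" and x0: "x \<noteq> 0" using assms by auto
    show "dual_log_deriv (\<lambda>x. 1 / (1 - a * x)) x = a * x / (1 - a * x)"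
      unfolding dual_log_deriv_def DERIV_imp_deriv[OF d2[OF n]]
    proof -
      have g: "\<And>d::complex. d \<noteq> 0 \<Longrightarrow> x * (a / d\<^sup>2) / (1 / d) = a * x / d"
        by (simp add: field_simps power2_eq_square)
      show "x * (a / (1 - a * x)\<^sup>2) / (1 / (1 - a * x)) = a * x / (1 - a * x)"
        using g[OF n] by simp
    qed
  qed
  have C: "\<exists>x\<in>U. a * x / (1 - a * x) \<noteq> 1 / (1 - a * x)"
  proof -
    obtain x where x: "x \<in> U" using assms(2) unfolding is_domain_def by auto
    then have n: "1 - a*x \<noteq> 0" using assms by auto
    have "a * x / (1 - a * x) \<noteq> 1 / (1 - a * x)"
    proof
      assume "a * x / (1 - a * x) = 1 / (1 - a * x)"
      then have "a * x = 1" using n by (simp add: divide_cancel_right)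
      then show False using n by simp
    qed
    then show ?thesis using x by blast
  qed
  have H1: "(\<lambda>x. a * x / (1 - a * x)) holomorphic_on U"
    using assms(4) by (intro holomorphic_intros) auto
  have H2: "(\<lambda>x. 1 / (1 - a * x)) holomorphic_on U"
    using assms(4) by (intro holomorphic_intros) auto
  show ?thesis using A B C H1 H2 assms(5) unfolding nondeg_period2_orbit_def by blast
qed

end
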